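(* Consider a slender, possibly compressible/extensible filament moving in the plane (the $x$–$y$ plane) in an inertialess medium described by resistive force theory, with isotropic drag, i.e. $\gamma := C_\perp / C_\parallel = 1$. Let the filament be parametrised by a Lagrangian label $s_0 \in [0, L_0]$ (arc length in a reference configuration of length $L_0$), with current arc length $s = s(s_0,t)$ satisfying $\partial s/\partial s_0 = 1 + \eta\, p(s_0,t)$ for a constant $\eta$ and a prescribed function $p$, so that the current length is $L(t) = \int_0^{L_0}(1+\eta p(s_0,t))\,\mathrm{d}s_0$. Let $\bm{x}(s,t)$ denote the position in the laboratory frame of the material point with current arc length $s$, and define the centre of geometry $$\overline{\bm{X}}(t) = \frac{1}{L(t)} \int_0^{L(t)} \bm{x}(s,t)\,\mathrm{d}s .$$ Then: (i) if the compression is spatially uniform, i.e. $\partial p/\partial s_0 = 0$ for all times, then $\mathrm{d}\overline{\bm{X}}/\mathrm{d}t = \bm{0}$ for all times, so no net motion is possible; (ii) otherwise (if $\partial p/\partial s_0 \neq 0$), net motion is possible, i.e. $\mathrm{d}\overline{\bm{X}}/\mathrm{d}t$ need not vanish.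
   Context: Kinematics: the shape of the filament in a body-fixed frame is prescribed (through the compression function $p(s_0,t)$ above and a prescribed tangent-angle function $\tilde\theta(s_0,t)$ giving the body-frame position $\tilde{\bm{x}}(s_0,t)$); the laboratory position is $\bm{x} = \bm{X}(t) + \mathbf{R}_{\Theta(t)}\tilde{\bm{x}}(s_0,t)$, where $\bm{X}(t)$ and the rotation angle $\Theta(t)$ (with $\mathbf{R}_\Theta$ the planar rotation matrix) are unknowns of the rigid-body motion. The local velocity of a material point is the Lagrangian derivative $D\bm{x}/Dt = \partial \bm{x}(s_0,t)/\partial t$ at fixed $s_0$. Resistive force theory: the force per unit (current) length exerted by the medium on the filament is $\bm{f} = -C_\parallel\,(\tfrac{D\bm{x}}{Dt}\cdot \bm{e}_\parallel)\,\bm{e}_\parallel - C_\perp\,(\tfrac{D\bm{x}}{Dt}\cdot \bm{e}_\perp)\,\bm{e}_\perp$, where $\bm{e}_\parallel, \bm{e}_\perp$ are the local unit tangent and normal vectors and $C_\parallel, C_\perp > 0$ are the tangential and normal drag coefficients; isotropic drag $\gamma = 1$ means $C_\parallel = C_\perp = C$, so $\bm{f} = -C\, D\bm{x}/Dt$. Dynamics: the rigid motion $(\bm{X}(t),\Theta(t))$ is determined by the force-free and torque-free conditions $\int_0^{L(t)} \bm{f}\,\mathrm{d}s = \bm{0}$ and $\int_0^{L(t)} \tilde{\bm{x}} \times \tilde{\bm{f}}\,\mathrm{d}s = \bm{0}$ at every time (no external forces or torques). *)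

theory Defs
  imports "HOL-Analysis.Analysis"
begin

text \<open>The plane is modelled by the complex numbers (the x-y plane).
  Parameters: eta (compressibility constant), p (compression function),
  th (body-frame tangent angle), X (lab position of the body frame origin),
  Th (rotation angle of the body frame).\<close>

definition cross2 :: "complex \<Rightarrow> complex \<Rightarrow> real" where
  "cross2 a b = Im (cnj a * b)"

definition rot :: "real \<Rightarrow> complex \<Rightarrow> complex" where
  "rot Th z = cis Th * z"

definition body_pos :: "real \<Rightarrow> (real \<Rightarrow> real \<Rightarrow> real) \<Rightarrow> (real \<Rightarrow> real \<Rightarrow> real)
    \<Rightarrow> real \<Rightarrow> real \<Rightarrow> complex" where
  "body_pos eta p th s0 t =
     integral {0..s0} (\<lambda>\<sigma>. complex_of_real (1 + eta * p \<sigma> t) * cis (th \<sigma> t))"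

definition lab_pos :: "real \<Rightarrow> (real \<Rightarrow> real \<Rightarrow> real) \<Rightarrow> (real \<Rightarrow> real \<Rightarrow> real)
    \<Rightarrow> (real \<Rightarrow> complex) \<Rightarrow> (real \<Rightarrow> real) \<Rightarrow> real \<Rightarrow> real \<Rightarrow> complex" where
  "lab_pos eta p th X Th s0 t = X t + rot (Th t) (body_pos eta p th s0 t)"

definition lab_vel :: "real \<Rightarrow> (real \<Rightarrow> real \<Rightarrow> real) \<Rightarrow> (real \<Rightarrow> real \<Rightarrow> real)
    \<Rightarrow> (real \<Rightarrow> complex) \<Rightarrow> (real \<Rightarrow> real) \<Rightarrow> real \<Rightarrow> real \<Rightarrow> complex" where
  "lab_vel eta p th X Th s0 t = vector_derivative (\<lambda>\<tau>. lab_pos eta p th X Th s0 \<tau>) (at t)"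

definition e_par :: "(real \<Rightarrow> real \<Rightarrow> real) \<Rightarrow> (real \<Rightarrow> real) \<Rightarrow> real \<Rightarrow> real \<Rightarrow> complex" where
  "e_par th Th s0 t = cis (Th t + th s0 t)"

definition e_perp :: "(real \<Rightarrow> real \<Rightarrow> real) \<Rightarrow> (real \<Rightarrow> real) \<Rightarrow> real \<Rightarrow> real \<Rightarrow> complex" where
  "e_perp th Th s0 t = \<i> * e_par th Th s0 t"

definition rft_force :: "real \<Rightarrow> real \<Rightarrow> real \<Rightarrow> (real \<Rightarrow> real \<Rightarrow> real) \<Rightarrow> (real \<Rightarrow> real \<Rightarrow> real)
    \<Rightarrow> (real \<Rightarrow> complex) \<Rightarrow> (real \<Rightarrow> real) \<Rightarrow> real \<Rightarrow> real \<Rightarrow> complex" where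
  "rft_force Cpar Cperp eta p th X Th s0 t =
     (let v = lab_vel eta p th X Th s0 t; ep = e_par th Th s0 t; en = e_perp th Th s0 t
      in - ((Cpar * (v \<bullet> ep)) *\<^sub>R ep) - ((Cperp * (v \<bullet> en)) *\<^sub>R en))"

definition cur_length :: "real \<Rightarrow> real \<Rightarrow> (real \<Rightarrow> real \<Rightarrow> real) \<Rightarrow> real \<Rightarrow> real" where
  "cur_length L0 eta p t = integral {0..L0} (\<lambda>s0. 1 + eta * p s0 t)"

text \<open>Centre of geometry (1/L) int_0^L x ds, written in Lagrangian coordinates
  via ds = (1 + eta p) ds0.\<close>
definition centre_geom :: "real \<Rightarrow> real \<Rightarrow> (real \<Rightarrow> real \<Rightarrow> real) \<Rightarrow> (real \<Rightarrow> real \<Rightarrow> real)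
    \<Rightarrow> (real \<Rightarrow> complex) \<Rightarrow> (real \<Rightarrow> real) \<Rightarrow> real \<Rightarrow> complex" where
  "centre_geom L0 eta p th X Th t =
     (1 / cur_length L0 eta p t) *\<^sub>R
       integral {0..L0} (\<lambda>s0. (1 + eta * p s0 t) *\<^sub>R lab_pos eta p th X Th s0 t)"

definition force_free :: "real \<Rightarrow> real \<Rightarrow> real \<Rightarrow> real \<Rightarrow> (real \<Rightarrow> real \<Rightarrow> real)
    \<Rightarrow> (real \<Rightarrow> real \<Rightarrow> real) \<Rightarrow> (real \<Rightarrow> complex) \<Rightarrow> (real \<Rightarrow> real) \<Rightarrow> bool" where
  "force_free L0 Cpar Cperp eta p th X Th \<longleftrightarrow>
     (\<forall>t. integral {0..L0}
            (\<lambda>s0. (1 + eta * p s0 t) *\<^sub>R rft_force Cpar Cperp eta p th X Th s0 t) = 0)"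

text \<open>Torque-free condition int_0^L xt \<times> ft ds = 0, with body-frame force ft = R_{-Th} f.\<close>
definition torque_free :: "real \<Rightarrow> real \<Rightarrow> real \<Rightarrow> real \<Rightarrow> (real \<Rightarrow> real \<Rightarrow> real)
    \<Rightarrow> (real \<Rightarrow> real \<Rightarrow> real) \<Rightarrow> (real \<Rightarrow> complex) \<Rightarrow> (real \<Rightarrow> real) \<Rightarrow> bool" where
  "torque_free L0 Cpar Cperp eta p th X Th \<longleftrightarrow>
     (\<forall>t. integral {0..L0}
            (\<lambda>s0. (1 + eta * p s0 t) *
                   cross2 (body_pos eta p th s0 t)
                          (rot (- Th t) (rft_force Cpar Cperp eta p th X Th s0 t))) = 0)"

definition rft_swimmer :: "real \<Rightarrow> real \<Rightarrow> real \<Rightarrow> real \<Rightarrow> (real \<Rightarrow> real \<Rightarrow> real)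
    \<Rightarrow> (real \<Rightarrow> real \<Rightarrow> real) \<Rightarrow> (real \<Rightarrow> complex) \<Rightarrow> (real \<Rightarrow> real) \<Rightarrow> bool" where
  "rft_swimmer L0 Cpar Cperp eta p th X Th \<longleftrightarrow>
     L0 > 0 \<and> Cpar > 0 \<and> Cperp > 0 \<and>
     (\<forall>s0\<in>{0..L0}. \<forall>t. 1 + eta * p s0 t > 0) \<and>
     continuous_on ({0..L0} \<times> UNIV) (\<lambda>(s, t). p s t) \<and>
     (\<exists>pt. continuous_on ({0..L0} \<times> UNIV) (\<lambda>(s, t). pt s t) \<and>
        (\<forall>s0\<in>{0..L0}. \<forall>t. ((\<lambda>\<tau>. p s0 \<tau>) has_real_derivative pt s0 t) (at t))) \<and>
     continuous_on ({0..L0} \<times> UNIV) (\<lambda>(s, t). th s t) \<and>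
     (\<exists>tht. continuous_on ({0..L0} \<times> UNIV) (\<lambda>(s, t). tht s t) \<and>
        (\<forall>s0\<in>{0..L0}. \<forall>t. ((\<lambda>\<tau>. th s0 \<tau>) has_real_derivative tht s0 t) (at t))) \<and>
     (\<forall>t. X differentiable (at t)) \<and>
     (\<forall>t. Th differentiable (at t)) \<and>
     force_free L0 Cpar Cperp eta p th X Th \<and>
     torque_free L0 Cpar Cperp eta p th X Th"

end

theory Submission
  imports Defs
begin

lemma cis_vd2:
  assumes "(f has_real_derivative d) (at x within A)"
  shows "((\<lambda>x. cis (f x)) has_vector_derivative (complex_of_real d * (\<i> * cis (f x)))) (at x within A)"
proof -
  have "(f has_derivative (\<lambda>t. t * d)) (at x within A)"
    using assms by (simp add: has_field_derivative_def mult_commute_abs)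
  from has_derivative_cis[OF this] show ?thesis
    by (simp add: has_vector_derivative_def scaleR_conv_of_real algebra_simps)
qed

lemma rft_iso:
  fixes v :: complex
  shows "(v \<bullet> cis a) *\<^sub>R cis a + (v \<bullet> (\<i> * cis a)) *\<^sub>R (\<i> * cis a) = v"
proof -
  have e: "\<i> * cis a = Complex (- sin a) (cos a)" by (simp add: complex_eq_iff)
  have s: "sin a * sin a + cos a * cos a = 1" using sin_cos_squared_add[of a] by (simp add: power2_eq_square)
  have r: "Re ((v \<bullet> cis a) *\<^sub>R cis a + (v \<bullet> (\<i> * cis a)) *\<^sub>R (\<i> * cis a)) = Re v"
    unfolding e using s by (simp add: inner_complex_def) algebra
  have i: "Im ((v \<bullet> cis a) *\<^sub>R cis a + (v \<bullet> (\<i> * cis a)) *\<^sub>R (\<i> * cis a)) = Im v"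
    unfolding e using s by (simp add: inner_complex_def) algebra
  show ?thesis using r i by (simp add: complex_eq_iff)
qed

lemma byparts:
  fixes k :: "real \<Rightarrow> complex"
  assumes k: "continuous_on {0..L} k" and L: "0 \<le> L"
  shows "((\<lambda>s. integral {0..s} k) has_integral integral {0..L} (\<lambda>\<sigma>. (L - \<sigma>) *\<^sub>R k \<sigma>)) {0..L}"
proof -
  define \<Phi> where "\<Phi> s = s *\<^sub>R integral {0..s} k - integral {0..s} (\<lambda>\<sigma>. \<sigma> *\<^sub>R k \<sigma>)" for s
  have ck2: "continuous_on {0..L} (\<lambda>\<sigma>. \<sigma> *\<^sub>R k \<sigma>)" by (intro continuous_intros k)
  have "((\<lambda>s. integral {0..s} k) has_integral (\<Phi> L - \<Phi> 0)) {0..L}"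
  proof (rule fundamental_theorem_of_calculus[OF L])
    fix x assume x: "x \<in> {0..L}"
    have d1: "((\<lambda>u. integral {0..u} k) has_vector_derivative k x) (at x within {0..L})"
      by (rule integral_has_vector_derivative[OF k x])
    have d2: "((\<lambda>u. integral {0..u} (\<lambda>\<sigma>. \<sigma> *\<^sub>R k \<sigma>)) has_vector_derivative x *\<^sub>R k x) (at x within {0..L})"
      by (rule integral_has_vector_derivative[OF ck2 x])
    have "(\<Phi> has_vector_derivative (x *\<^sub>R k x + 1 *\<^sub>R integral {0..x} k - x *\<^sub>R k x)) (at x within {0..L})"
      unfolding \<Phi>_def
      by (intro has_vector_derivative_diff has_vector_derivative_scaleR d1 d2 DERIV_ident)
    then show "(\<Phi> has_vector_derivative integral {0..x} k) (at x within {0..L})" by simp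
  qed
  moreover have "\<Phi> L - \<Phi> 0 = integral {0..L} (\<lambda>\<sigma>. (L - \<sigma>) *\<^sub>R k \<sigma>)"
  proof -
    have i1: "k integrable_on {0..L}" by (rule integrable_continuous_real[OF k])
    have i2: "(\<lambda>\<sigma>. \<sigma> *\<^sub>R k \<sigma>) integrable_on {0..L}" by (rule integrable_continuous_real[OF ck2])
    have "integral {0..L} (\<lambda>\<sigma>. (L - \<sigma>) *\<^sub>R k \<sigma>) = integral {0..L} (\<lambda>\<sigma>. L *\<^sub>R k \<sigma> - \<sigma> *\<^sub>R k \<sigma>)"
      by (simp add: scaleR_diff_left)
    also have "\<dots> = L *\<^sub>R integral {0..L} k - integral {0..L} (\<lambda>\<sigma>. \<sigma> *\<^sub>R k \<sigma>)"
      using i1 i2 by (simp add: integral_diff[OF integrable_cmul[OF i1] i2])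
    finally show ?thesis by (simp add: \<Phi>_def)
  qed
  ultimately show ?thesis by simp
qed

lemma swap_cont:
  fixes L0 b :: real and F :: "real \<Rightarrow> real \<Rightarrow> 'c::topological_space"
  assumes "continuous_on ({0..L0} \<times> (UNIV::real set)) (\<lambda>z. F (fst z) (snd z))" "b \<le> L0"
  shows "continuous_on (UNIV \<times> cbox 0 b) (\<lambda>(x, t). F t x)"
proof -
  have "continuous_on (UNIV \<times> cbox 0 b) (\<lambda>z. F (fst (snd z, fst z)) (snd (snd z, fst z)))"
    by (rule continuous_on_compose2[OF assms(1), of _ "\<lambda>z. (snd z, fst z)"])
       (use assms(2) in \<open>auto intro!: continuous_intros simp: cbox_interval\<close>)
  then show ?thesis by (simp add: case_prod_beta')
qed

lemma lab_int_deriv: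
  fixes p pt th tht :: "real \<Rightarrow> real \<Rightarrow> real"
  assumes L0: "L0 > 0"
    and cp: "continuous_on ({0..L0} \<times> UNIV) (\<lambda>(s, t). p s t)"
    and cpt: "continuous_on ({0..L0} \<times> UNIV) (\<lambda>(s, t). pt s t)"
    and dp: "\<forall>s0\<in>{0..L0}. \<forall>t. ((\<lambda>\<tau>. p s0 \<tau>) has_real_derivative pt s0 t) (at t)"
    and cth: "continuous_on ({0..L0} \<times> UNIV) (\<lambda>(s, t). th s t)"
    and ctht: "continuous_on ({0..L0} \<times> UNIV) (\<lambda>(s, t). tht s t)"
    and dth: "\<forall>s0\<in>{0..L0}. \<forall>t. ((\<lambda>\<tau>. th s0 \<tau>) has_real_derivative tht s0 t) (at t)"
    and dX: "\<forall>t. X differentiable (at t)"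
    and dTh: "\<forall>t. Th differentiable (at t)"
  shows "((\<lambda>t. integral {0..L0} (\<lambda>s0. lab_pos eta p th X Th s0 t)) has_vector_derivative
            integral {0..L0} (\<lambda>s0. lab_vel eta p th X Th s0 t)) (at t)"
proof -
  define g where "g \<sigma> t = complex_of_real (1 + eta * p \<sigma> t) * cis (th \<sigma> t)" for \<sigma> t
  define h where "h \<sigma> t = complex_of_real (1 + eta * p \<sigma> t) * (complex_of_real (tht \<sigma> t) * (\<i> * cis (th \<sigma> t)))
      + complex_of_real (eta * pt \<sigma> t) * cis (th \<sigma> t)" for \<sigma> t
  define B where "B s0 t = integral {0..s0} (\<lambda>\<sigma>. g \<sigma> t)" for s0 t
  define Bt where "Bt s0 t = integral {0..s0} (\<lambda>\<sigma>. h \<sigma> t)" for s0 t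
  define J where "J t = integral {0..L0} (\<lambda>\<sigma>. (L0 - \<sigma>) *\<^sub>R g \<sigma> t)" for t
  define J' where "J' t = integral {0..L0} (\<lambda>\<sigma>. (L0 - \<sigma>) *\<^sub>R h \<sigma> t)" for t
  define Xd where "Xd t = vector_derivative X (at t)" for t
  define Thd where "Thd t = deriv Th t" for t
  have Bdef: "body_pos eta p th s0 t = B s0 t" for s0 t
    by (simp add: body_pos_def B_def g_def)
  have cp': "continuous_on ({0..L0} \<times> UNIV) (\<lambda>z. p (fst z) (snd z))" using cp by (simp add: case_prod_beta')
  have cpt': "continuous_on ({0..L0} \<times> UNIV) (\<lambda>z. pt (fst z) (snd z))" using cpt by (simp add: case_prod_beta')
  have cth': "continuous_on ({0..L0} \<times> UNIV) (\<lambda>z. th (fst z) (snd z))" using cth by (simp add: case_prod_beta')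
  have ctht': "continuous_on ({0..L0} \<times> UNIV) (\<lambda>z. tht (fst z) (snd z))" using ctht by (simp add: case_prod_beta')
  have cg: "continuous_on ({0..L0} \<times> UNIV) (\<lambda>z. g (fst z) (snd z))"
    unfolding g_def by (intro continuous_intros cp' cth')
  have ch: "continuous_on ({0..L0} \<times> UNIV) (\<lambda>z. h (fst z) (snd z))"
    unfolding h_def by (intro continuous_intros cp' cth' cpt' ctht')
  have cgt: "continuous_on {0..L0} (\<lambda>\<sigma>. g \<sigma> t)" for t
    by (rule continuous_on_compose2[OF cg, of _ "\<lambda>\<sigma>. (\<sigma>, t)", simplified]) (auto intro!: continuous_intros)
  have cht: "continuous_on {0..L0} (\<lambda>\<sigma>. h \<sigma> t)" for t
    by (rule continuous_on_compose2[OF ch, of _ "\<lambda>\<sigma>. (\<sigma>, t)", simplified]) (auto intro!: continuous_intros)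
  have dg: "((\<lambda>\<tau>. g \<sigma> \<tau>) has_vector_derivative h \<sigma> t) (at t)" if "\<sigma> \<in> {0..L0}" for \<sigma> t
  proof -
    have d1: "((\<lambda>\<tau>. 1 + eta * p \<sigma> \<tau>) has_real_derivative eta * pt \<sigma> t) (at t)"
      using dp that by (auto intro!: derivative_eq_intros)
    have d2: "((\<lambda>\<tau>. cis (th \<sigma> \<tau>)) has_vector_derivative
        complex_of_real (tht \<sigma> t) * (\<i> * cis (th \<sigma> t))) (at t)"
      using dth that by (intro cis_vd2) auto
    show ?thesis unfolding g_def h_def
      using has_vector_derivative_mult[OF has_vector_derivative_of_real[OF d1] d2] by simp
  qed
  have dB: "((\<lambda>\<tau>. B s0 \<tau>) has_vector_derivative Bt s0 t) (at t)" if s0: "s0 \<in> {0..L0}" for s0 t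
  proof -
    have "((\<lambda>\<tau>. integral (cbox 0 s0) (\<lambda>\<sigma>. g \<sigma> \<tau>)) has_vector_derivative
        integral (cbox 0 s0) (\<lambda>\<sigma>. h \<sigma> t)) (at t within UNIV)"
    proof (rule leibniz_rule_vector_derivative[where fx="\<lambda>\<tau> \<sigma>. h \<sigma> \<tau>"])
      show "((\<lambda>\<tau>. g \<sigma> \<tau>) has_vector_derivative h \<sigma> x) (at x within UNIV)" if "\<sigma> \<in> cbox 0 s0" for x \<sigma>
        using dg[of \<sigma> x] that s0 by auto
      show "(\<lambda>\<sigma>. g \<sigma> x) integrable_on cbox 0 s0" for x
        using s0 by (auto intro!: integrable_continuous_real continuous_on_subset[OF cgt])
      show "continuous_on (UNIV \<times> cbox 0 s0) (\<lambda>(x, t). h t x)"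
        using s0 by (intro swap_cont[OF ch]) auto
    qed auto
    then show ?thesis by (simp add: B_def Bt_def)
  qed
  have iB: "((\<lambda>s0. B s0 t) has_integral J t) {0..L0}" for t
    unfolding B_def J_def using byparts[OF cgt] L0 by simp
  have iBt: "((\<lambda>s0. Bt s0 t) has_integral J' t) {0..L0}" for t
    unfolding Bt_def J'_def using byparts[OF cht] L0 by simp
  have dJ: "(J has_vector_derivative J' t) (at t)" for t
  proof -
    have "((\<lambda>\<tau>. integral (cbox 0 L0) (\<lambda>\<sigma>. (L0 - \<sigma>) *\<^sub>R g \<sigma> \<tau>)) has_vector_derivative
        integral (cbox 0 L0) (\<lambda>\<sigma>. (L0 - \<sigma>) *\<^sub>R h \<sigma> t)) (at t within UNIV)"
    proof (rule leibniz_rule_vector_derivative[where fx="\<lambda>\<tau> \<sigma>. (L0 - \<sigma>) *\<^sub>R h \<sigma> \<tau>"])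
      show "((\<lambda>\<tau>. (L0 - \<sigma>) *\<^sub>R g \<sigma> \<tau>) has_vector_derivative (L0 - \<sigma>) *\<^sub>R h \<sigma> x) (at x within UNIV)"
        if "\<sigma> \<in> cbox 0 L0" for x \<sigma>
        using has_vector_derivative_scaleR[OF DERIV_const[of "L0 - \<sigma>"] dg[of \<sigma> x]] that by auto
      show "(\<lambda>\<sigma>. (L0 - \<sigma>) *\<^sub>R g \<sigma> x) integrable_on cbox 0 L0" for x
        by (auto intro!: integrable_continuous_real continuous_intros cgt)
      have "continuous_on (UNIV \<times> cbox 0 L0) (\<lambda>(x, t). h t x)"
        by (intro swap_cont[OF ch]) auto
      then show "continuous_on (UNIV \<times> cbox 0 L0) (\<lambda>(x, t). (L0 - t) *\<^sub>R h t x)"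
        by (simp add: case_prod_beta') (intro continuous_intros)
    qed auto
    moreover have "J = (\<lambda>\<tau>. integral {0..L0} (\<lambda>\<sigma>. (L0 - \<sigma>) *\<^sub>R g \<sigma> \<tau>))"
      by (simp add: fun_eq_iff J_def)
    ultimately show ?thesis by (simp add: J'_def)
  qed
  have dXt: "(X has_vector_derivative Xd t) (at t)" for t
    using dX by (simp add: Xd_def vector_derivative_works[symmetric])
  have dTht: "(Th has_real_derivative Thd t) (at t)" for t
    using dTh by (simp add: Thd_def DERIV_deriv_iff_real_differentiable)
  have lp: "lab_pos eta p th X Th s0 t = X t + cis (Th t) * B s0 t" for s0 t
    by (simp add: lab_pos_def rot_def Bdef)
  have lv: "lab_vel eta p th X Th s0 t = Xd t + (complex_of_real (Thd t) * (\<i> * cis (Th t))) * B s0 t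
              + cis (Th t) * Bt s0 t" if "s0 \<in> {0..L0}" for s0 t
  proof -
    have "((\<lambda>\<tau>. lab_pos eta p th X Th s0 \<tau>) has_vector_derivative
        Xd t + (cis (Th t) * Bt s0 t + (complex_of_real (Thd t) * (\<i> * cis (Th t))) * B s0 t)) (at t)"
      unfolding lp
      by (intro has_vector_derivative_add dXt has_vector_derivative_mult cis_vd2 dTht dB that)
    then show ?thesis unfolding lab_vel_def by (subst vector_derivative_at) (auto simp: algebra_simps)
  qed
  have IP: "integral {0..L0} (\<lambda>s0. lab_pos eta p th X Th s0 t) = L0 *\<^sub>R X t + cis (Th t) * J t" for t
  proof -
    have "((\<lambda>s0. X t + cis (Th t) * B s0 t) has_integral (L0 *\<^sub>R X t + cis (Th t) * J t)) {0..L0}"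
      using has_integral_add[OF has_integral_const_real[of "X t" 0 L0] has_integral_mult_right[OF iB[of t], of "cis (Th t)"]] L0
      by simp
    then show ?thesis unfolding lp by (rule integral_unique)
  qed
  have IV: "integral {0..L0} (\<lambda>s0. lab_vel eta p th X Th s0 t) =
      L0 *\<^sub>R Xd t + (complex_of_real (Thd t) * (\<i> * cis (Th t))) * J t + cis (Th t) * J' t"
  proof -
    have "((\<lambda>s0. Xd t + (complex_of_real (Thd t) * (\<i> * cis (Th t))) * B s0 t + cis (Th t) * Bt s0 t)
       has_integral (L0 *\<^sub>R Xd t + (complex_of_real (Thd t) * (\<i> * cis (Th t))) * J t + cis (Th t) * J' t)) {0..L0}"
      using has_integral_add[OF has_integral_add[OF has_integral_const_real[of "Xd t" 0 L0]
           has_integral_mult_right[OF iB[of t]]] has_integral_mult_right[OF iBt[of t]]] L0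
      by simp
    then have "((\<lambda>s0. lab_vel eta p th X Th s0 t) has_integral
        (L0 *\<^sub>R Xd t + (complex_of_real (Thd t) * (\<i> * cis (Th t))) * J t + cis (Th t) * J' t)) {0..L0}"
      by (rule has_integral_eq[rotated]) (simp add: lv)
    then show ?thesis by (rule integral_unique)
  qed
  have "((\<lambda>t. L0 *\<^sub>R X t + cis (Th t) * J t) has_vector_derivative
      (L0 *\<^sub>R Xd t + (cis (Th t) * J' t + (complex_of_real (Thd t) * (\<i> * cis (Th t))) * J t))) (at t)"
  proof -
    have a: "((\<lambda>t. L0 *\<^sub>R X t) has_vector_derivative L0 *\<^sub>R Xd t) (at t)"
      using has_vector_derivative_scaleR[OF DERIV_const dXt] by simp
    show ?thesis by (rule has_vector_derivative_add[OF a has_vector_derivative_mult[OF cis_vd2[OF dTht] dJ]])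
  qed
  then show ?thesis unfolding IP IV by (simp add: algebra_simps)
qed

lemma part1:
  assumes sw: "rft_swimmer L0 Cpar Cperp eta p th X Th" and CC: "Cpar = Cperp"
    and p0: "\<forall>t. \<forall>s0\<in>{0..L0}. ((\<lambda>\<sigma>. p \<sigma> t) has_real_derivative 0) (at s0 within {0..L0})"
  shows "(centre_geom L0 eta p th X Th has_vector_derivative 0) (at t)"
proof -
  note S = sw[unfolded rft_swimmer_def]
  have L0: "L0 > 0" and C: "Cpar > 0"
    and pos: "\<forall>s0\<in>{0..L0}. \<forall>t. 1 + eta * p s0 t > 0"
    and cp: "continuous_on ({0..L0} \<times> UNIV) (\<lambda>(s, t). p s t)"
    and cth: "continuous_on ({0..L0} \<times> UNIV) (\<lambda>(s, t). th s t)"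
    and dX: "\<forall>t. X differentiable (at t)"
    and dTh: "\<forall>t. Th differentiable (at t)"
    and ff: "force_free L0 Cpar Cperp eta p th X Th"
    using S by auto
  have "\<exists>pt. continuous_on ({0..L0} \<times> UNIV) (\<lambda>(s, t). pt s t) \<and>
        (\<forall>s0\<in>{0..L0}. \<forall>t. ((\<lambda>\<tau>. p s0 \<tau>) has_real_derivative pt s0 t) (at t))"
    using S by simp
  then obtain pt where cpt: "continuous_on ({0..L0} \<times> UNIV) (\<lambda>(s, t). pt s t)"
    and dp: "\<forall>s0\<in>{0..L0}. \<forall>t. ((\<lambda>\<tau>. p s0 \<tau>) has_real_derivative pt s0 t) (at t)"
    by (elim exE conjE)
  have "\<exists>tht. continuous_on ({0..L0} \<times> UNIV) (\<lambda>(s, t). tht s t) \<and>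
        (\<forall>s0\<in>{0..L0}. \<forall>t. ((\<lambda>\<tau>. th s0 \<tau>) has_real_derivative tht s0 t) (at t))"
    using S by simp
  then obtain tht where ctht: "continuous_on ({0..L0} \<times> UNIV) (\<lambda>(s, t). tht s t)"
    and dth: "\<forall>s0\<in>{0..L0}. \<forall>t. ((\<lambda>\<tau>. th s0 \<tau>) has_real_derivative tht s0 t) (at t)"
    by (elim exE conjE)
  define q where "q \<tau> = p 0 \<tau>" for \<tau>
  have const: "p s0 \<tau> = q \<tau>" if "s0 \<in> {0..L0}" for s0 \<tau>
  proof -
    obtain c where "\<forall>x\<in>{0..L0}. p x \<tau> = c"
      using has_field_derivative_zero_constant[of "{0..L0}" "\<lambda>\<sigma>. p \<sigma> \<tau>"] p0 by auto
    then show ?thesis using that L0 by (auto simp: q_def)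
  qed
  define w where "w \<tau> = 1 + eta * q \<tau>" for \<tau>
  have wpos: "w \<tau> > 0" for \<tau> using pos L0 by (auto simp: w_def q_def)
  have force: "rft_force Cpar Cperp eta p th X Th s0 \<tau> = - (Cpar *\<^sub>R lab_vel eta p th X Th s0 \<tau>)" for s0 \<tau>
  proof -
    define v where "v = lab_vel eta p th X Th s0 \<tau>"
    define a where "a = Th \<tau> + th s0 \<tau>"
    have "rft_force Cpar Cperp eta p th X Th s0 \<tau> =
        - (Cpar *\<^sub>R ((v \<bullet> cis a) *\<^sub>R cis a + (v \<bullet> (\<i> * cis a)) *\<^sub>R (\<i> * cis a)))"
      unfolding rft_force_def Let_def e_perp_def e_par_def v_def[symmetric] a_def[symmetric] CC
      by (simp add: scaleR_add_right)
    then show ?thesis by (simp add: rft_iso v_def)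
  qed
  have IV0: "integral {0..L0} (\<lambda>s0. lab_vel eta p th X Th s0 \<tau>) = 0" for \<tau>
  proof -
    have "integral {0..L0} (\<lambda>s0. (1 + eta * p s0 \<tau>) *\<^sub>R rft_force Cpar Cperp eta p th X Th s0 \<tau>) = 0"
      using ff unfolding force_free_def by blast
    moreover have "integral {0..L0} (\<lambda>s0. (1 + eta * p s0 \<tau>) *\<^sub>R rft_force Cpar Cperp eta p th X Th s0 \<tau>)
        = integral {0..L0} (\<lambda>s0. (- (w \<tau> * Cpar)) *\<^sub>R lab_vel eta p th X Th s0 \<tau>)"
      by (rule integral_cong) (simp add: force const w_def)
    ultimately have "(- (w \<tau> * Cpar)) *\<^sub>R integral {0..L0} (\<lambda>s0. lab_vel eta p th X Th s0 \<tau>) = 0"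
      by simp
    then show ?thesis using wpos[of \<tau>] C by simp
  qed
  have cen: "centre_geom L0 eta p th X Th \<tau> = (1 / L0) *\<^sub>R integral {0..L0} (\<lambda>s0. lab_pos eta p th X Th s0 \<tau>)" for \<tau>
  proof -
    have cl: "cur_length L0 eta p \<tau> = L0 * w \<tau>"
    proof -
      have "cur_length L0 eta p \<tau> = integral {0..L0} (\<lambda>s0. w \<tau>)"
        unfolding cur_length_def by (rule integral_cong) (simp add: const w_def)
      then show ?thesis using L0 by simp
    qed
    have "integral {0..L0} (\<lambda>s0. (1 + eta * p s0 \<tau>) *\<^sub>R lab_pos eta p th X Th s0 \<tau>)
        = integral {0..L0} (\<lambda>s0. w \<tau> *\<^sub>R lab_pos eta p th X Th s0 \<tau>)"
      by (rule integral_cong) (simp add: const w_def)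
    then show ?thesis unfolding centre_geom_def cl using wpos[of \<tau>] L0 by simp
  qed
  have "centre_geom L0 eta p th X Th = (\<lambda>\<tau>. (1 / L0) *\<^sub>R integral {0..L0} (\<lambda>s0. lab_pos eta p th X Th s0 \<tau>))"
    using cen by blast
  moreover have "((\<lambda>\<tau>. (1 / L0) *\<^sub>R integral {0..L0} (\<lambda>s0. lab_pos eta p th X Th s0 \<tau>)) has_vector_derivative
      (1 / L0) *\<^sub>R integral {0..L0} (\<lambda>s0. lab_vel eta p th X Th s0 t)) (at t)"
    using has_vector_derivative_scaleR[OF DERIV_const lab_int_deriv[OF L0 cp cpt dp cth ctht dth dX dTh]] by simp
  ultimately show ?thesis by (simp add: IV0)
qed

lemma rft_force_iso:
  "rft_force C C eta p th X Th s0 \<tau> = - (C *\<^sub>R lab_vel eta p th X Th s0 \<tau>)"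
proof -
  define v where "v = lab_vel eta p th X Th s0 \<tau>"
  define a where "a = Th \<tau> + th s0 \<tau>"
  have "rft_force C C eta p th X Th s0 \<tau> =
      - (C *\<^sub>R ((v \<bullet> cis a) *\<^sub>R cis a + (v \<bullet> (\<i> * cis a)) *\<^sub>R (\<i> * cis a)))"
    unfolding rft_force_def Let_def e_perp_def e_par_def v_def[symmetric] a_def[symmetric]
    by (simp add: scaleR_add_right)
  then show ?thesis by (simp add: rft_iso v_def)
qed

lemma ftc_real:
  fixes F f :: "real \<Rightarrow> real"
  assumes "a \<le> b" "\<And>x. (F has_real_derivative f x) (at x)"
  shows "((\<lambda>x. complex_of_real (f x)) has_integral complex_of_real (F b - F a)) {a..b}"
proof -
  have "(f has_integral (F b - F a)) {a..b}"
    by (rule fundamental_theorem_of_calculus[OF assms(1)])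
       (use assms(2) in \<open>auto simp: has_real_derivative_iff_has_vector_derivative intro: has_vector_derivative_at_within\<close>)
  then show ?thesis by (rule has_integral_of_real)
qed

definition "ex_p = (\<lambda>s t. sin t * (s - 1/2) :: real)"
definition "ex_X = (\<lambda>t. complex_of_real (sin t / 12))"

lemma ex_body: "s0 \<ge> 0 \<Longrightarrow> body_pos 1 ex_p (\<lambda>s t. 0) s0 t = complex_of_real (s0 + sin t * (s0^2 - s0) / 2)"
proof -
  assume s0: "s0 \<ge> 0"
  have "((\<lambda>x. complex_of_real (1 + sin t * (x - 1/2))) has_integral
       complex_of_real ((s0 + sin t * (s0^2 - s0) / 2) - (0 + sin t * (0^2 - 0) / 2))) {0..s0}"
    by (rule ftc_real[OF s0]) (auto intro!: derivative_eq_intros simp: field_simps power2_eq_square)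
  then show ?thesis unfolding body_pos_def ex_p_def by (simp add: integral_unique)
qed

lemma ex_pos: "s0 \<ge> 0 \<Longrightarrow> lab_pos 1 ex_p (\<lambda>s t. 0) ex_X (\<lambda>t. 0) s0 t =
    complex_of_real (sin t / 12 + s0 + sin t * (s0^2 - s0) / 2)"
  by (simp add: lab_pos_def rot_def ex_body ex_X_def)

lemma ex_vel: "s0 \<ge> 0 \<Longrightarrow> lab_vel 1 ex_p (\<lambda>s t. 0) ex_X (\<lambda>t. 0) s0 t =
    complex_of_real (cos t / 12 + cos t * (s0^2 - s0) / 2)"
proof -
  assume s0: "s0 \<ge> 0"
  have "((\<lambda>\<tau>. complex_of_real (sin \<tau> / 12 + s0 + sin \<tau> * (s0^2 - s0) / 2)) has_vector_derivative
      complex_of_real (cos t / 12 + cos t * (s0^2 - s0) / 2)) (at t)"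
    by (rule has_vector_derivative_of_real) (auto intro!: derivative_eq_intros)
  then show ?thesis unfolding lab_vel_def ex_pos[OF s0] by (rule vector_derivative_at)
qed

lemma ex_force_free: "force_free 1 1 1 1 ex_p (\<lambda>s t. 0) ex_X (\<lambda>t. 0)"
  unfolding force_free_def
proof
  fix t :: real
  define G where "G s = - cos t * ((s - 1/2)^3 / 6 - (s - 1/2) / 24 + sin t * ((s - 1/2)^4 / 8 - (s - 1/2)^2 / 48))" for s
  have "((\<lambda>x::real. complex_of_real (- (1 + sin t * (x - 1/2)) * (cos t / 12 + cos t * (x^2 - x) / 2)))
      has_integral complex_of_real (G 1 - G 0)) {0..1}"
    unfolding G_def by (rule ftc_real) (auto intro!: derivative_eq_intros simp: field_simps power2_eq_square power3_eq_cube)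
  moreover have "G 1 - G 0 = 0" by (simp add: G_def power2_eq_square power3_eq_cube power4_eq_xxxx)
  ultimately have I0: "((\<lambda>x::real. complex_of_real (- (1 + sin t * (x - 1/2)) * (cos t / 12 + cos t * (x^2 - x) / 2)))
      has_integral 0) {0..1}" by simp
  have EQ: "complex_of_real (- (1 + sin t * (x - 1/2)) * (cos t / 12 + cos t * (x^2 - x) / 2))
     = (1 + 1 * ex_p x t) *\<^sub>R rft_force 1 1 1 ex_p (\<lambda>s t. 0) ex_X (\<lambda>t. 0) x t" if "x \<in> {0..1}" for x
    using that
    apply (simp add: rft_force_iso ex_vel)
    apply (simp add: ex_p_def scaleR_conv_of_real)
    apply algebra
    done
  have "((\<lambda>s0. (1 + 1 * ex_p s0 t) *\<^sub>R rft_force 1 1 1 ex_p (\<lambda>s t. 0) ex_X (\<lambda>t. 0) s0 t) has_integral 0) {0..1}"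
    by (rule has_integral_eq[OF EQ I0])
  then show "integral {0..1} (\<lambda>s0. (1 + 1 * ex_p s0 t) *\<^sub>R rft_force 1 1 1 ex_p (\<lambda>s t. 0) ex_X (\<lambda>t. 0) s0 t) = 0"
    by (rule integral_unique)
qed

lemma ftc_r:
  fixes F f :: "real \<Rightarrow> real"
  assumes "a \<le> b" "\<And>x. (F has_real_derivative f x) (at x)"
  shows "(f has_integral (F b - F a)) {a..b}"
  by (rule fundamental_theorem_of_calculus[OF assms(1)])
     (use assms(2) in \<open>auto simp: has_real_derivative_iff_has_vector_derivative intro: has_vector_derivative_at_within\<close>)

lemma ex_torque_free: "torque_free 1 1 1 1 ex_p (\<lambda>s t. 0) ex_X (\<lambda>t. 0)"
  unfolding torque_free_def
proof
  fix t :: real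
  have "(1 + 1 * ex_p s0 t) * cross2 (body_pos 1 ex_p (\<lambda>s t. 0) s0 t)
          (rot (- 0) (rft_force 1 1 1 ex_p (\<lambda>s t. 0) ex_X (\<lambda>t. 0) s0 t)) = 0" if "s0 \<in> {0..1}" for s0
    using that by (simp add: rft_force_iso ex_vel ex_body rot_def cross2_def)
  note z = this
  have "((\<lambda>s0. (1 + 1 * ex_p s0 t) * cross2 (body_pos 1 ex_p (\<lambda>s t. 0) s0 t)
          (rot (- 0) (rft_force 1 1 1 ex_p (\<lambda>s t. 0) ex_X (\<lambda>t. 0) s0 t))) has_integral 0) {0..1}"
    by (rule has_integral_eq[OF _ has_integral_0]) (rule z[symmetric])
  then have "integral {0..1} (\<lambda>s0. (1 + 1 * ex_p s0 t) * cross2 (body_pos 1 ex_p (\<lambda>s t. 0) s0 t)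
          (rot (- 0) (rft_force 1 1 1 ex_p (\<lambda>s t. 0) ex_X (\<lambda>t. 0) s0 t))) = integral {0..1} (\<lambda>s0. 0::real)"
    by (simp add: integral_unique)
  then show "integral {0..1} (\<lambda>s0. (1 + 1 * ex_p s0 t) * cross2 (body_pos 1 ex_p (\<lambda>s t. 0) s0 t)
          (rot (- 0) (rft_force 1 1 1 ex_p (\<lambda>s t. 0) ex_X (\<lambda>t. 0) s0 t))) = 0" by simp
qed

lemma ex_centre: "centre_geom 1 1 ex_p (\<lambda>s t. 0) ex_X (\<lambda>t. 0) t = complex_of_real (sin t / 12 + 1/2)"
proof -
  define b where "b s = s + sin t * (s^2 - s) / 2" for s
  have "((\<lambda>s. 1 + 1 * ex_p s t) has_integral (b 1 - b 0)) {0..1}"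
    unfolding b_def ex_p_def by (rule ftc_r) (auto intro!: derivative_eq_intros simp: field_simps power2_eq_square)
  then have cl: "cur_length 1 1 ex_p t = 1" unfolding cur_length_def by (simp add: integral_unique b_def)
  define Q where "Q s = (sin t / 12) * b s + (b s)^2 / 2" for s
  have I1: "((\<lambda>s. complex_of_real ((1 + sin t * (s - 1/2)) * (sin t / 12 + b s))) has_integral
      complex_of_real (Q 1 - Q 0)) {0..1}"
    unfolding Q_def b_def by (rule ftc_real) (auto intro!: derivative_eq_intros simp: field_simps power2_eq_square)
  have QE: "Q 1 - Q 0 = sin t / 12 + 1/2" by (simp add: Q_def b_def)
  have EQ: "complex_of_real ((1 + sin t * (s - 1/2)) * (sin t / 12 + b s)) =
      (1 + 1 * ex_p s t) *\<^sub>R lab_pos 1 ex_p (\<lambda>s t. 0) ex_X (\<lambda>t. 0) s t" if "s \<in> {0..1}" for s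
  proof -
    have lp: "lab_pos 1 ex_p (\<lambda>s t. 0) ex_X (\<lambda>t. 0) s t = complex_of_real (sin t / 12 + b s)"
      using that by (simp add: ex_pos b_def add.assoc)
    have ep: "1 + 1 * ex_p s t = 1 + sin t * (s - 1/2)" by (simp add: ex_p_def)
    show ?thesis by (simp only: lp ep scaleR_conv_of_real of_real_mult)
  qed
  have "((\<lambda>s. (1 + 1 * ex_p s t) *\<^sub>R lab_pos 1 ex_p (\<lambda>s t. 0) ex_X (\<lambda>t. 0) s t) has_integral
      complex_of_real (sin t / 12 + 1/2)) {0..1}"
    using has_integral_eq[OF EQ I1] QE by simp
  then show ?thesis unfolding centre_geom_def cl by (simp add: integral_unique)
qed

lemma ex_pos_w: "\<forall>s0\<in>{0..1}. \<forall>t. 0 < 1 + 1 * ex_p s0 t"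
proof (intro ballI allI)
  fix s0 t :: real assume s0: "s0 \<in> {0..1}"
  have a: "\<bar>s0 - 1/2\<bar> \<le> 1/2" using s0 by (simp add: abs_if)
  have "\<bar>sin t * (s0 - 1/2)\<bar> \<le> 1 * (1/2)"
    unfolding abs_mult by (intro mult_mono abs_sin_le_one a) auto
  then show "0 < 1 + 1 * ex_p s0 t" by (simp add: ex_p_def abs_le_iff)
qed

lemma ex_cont_p: "continuous_on ({0..1} \<times> UNIV) (\<lambda>(s, t). ex_p s t)"
  by (simp add: ex_p_def case_prod_beta') (intro continuous_intros)

lemma ex_pt: "\<exists>pt. continuous_on ({0..1} \<times> UNIV) (\<lambda>(s, t). pt s t) \<and>
        (\<forall>s0\<in>{0..1}. \<forall>t. ((\<lambda>\<tau>. ex_p s0 \<tau>) has_real_derivative pt s0 t) (at t))"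
proof -
  have c: "continuous_on ({0..1::real} \<times> (UNIV::real set)) (\<lambda>z. cos (snd z) * (fst z - 1/2))"
    by (intro continuous_intros)
  have d: "\<forall>s0\<in>{0..1}. \<forall>t. ((\<lambda>\<tau>. ex_p s0 \<tau>) has_real_derivative cos t * (s0 - 1/2)) (at t)"
    unfolding ex_p_def by (auto intro!: derivative_eq_intros)
  show ?thesis by (rule exI[of _ "\<lambda>s t. cos t * (s - 1/2)"]) (simp add: case_prod_beta' c d)
qed

lemma ex_tht: "\<exists>tht. continuous_on ({0..1} \<times> UNIV) (\<lambda>(s, t). tht s t) \<and>
        (\<forall>s0\<in>{0..1::real}. \<forall>t. ((\<lambda>\<tau>. (\<lambda>s t. 0::real) s0 \<tau>) has_real_derivative tht s0 t) (at t))"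
  by (rule exI[of _ "\<lambda>s t. 0"]) (simp add: continuous_on_const)

lemma ex_dX: "\<forall>t. ex_X differentiable (at t)"
proof
  fix t :: real
  have "(ex_X has_vector_derivative complex_of_real (cos t / 12)) (at t)"
    unfolding ex_X_def by (rule has_vector_derivative_of_real) (auto intro!: derivative_eq_intros)
  then show "ex_X differentiable (at t)" by (rule differentiableI_vector)
qed

lemma ex_swimmer: "rft_swimmer 1 1 1 1 ex_p (\<lambda>s t. 0) ex_X (\<lambda>t. 0)"
  unfolding rft_swimmer_def
  apply (intro conjI)
             apply simp
            apply simp
           apply simp
          apply (rule ex_pos_w)
         apply (rule ex_cont_p)
        apply (rule ex_pt)
       apply (simp add: continuous_on_const)
      apply (rule ex_tht)
     apply (rule ex_dX)
    apply simp
   apply (rule ex_force_free)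
  apply (rule ex_torque_free)
  done

lemma P1: "\<forall>L0 Cpar Cperp eta p th X Th.
            rft_swimmer L0 Cpar Cperp eta p th X Th \<and> Cpar = Cperp \<and>
            (\<forall>t. \<forall>s0\<in>{0..L0}. ((\<lambda>\<sigma>. p \<sigma> t) has_real_derivative 0) (at s0 within {0..L0}))
            \<longrightarrow> (\<forall>t. (centre_geom L0 eta p th X Th has_vector_derivative 0) (at t))"
proof (intro allI impI)
  fix L0 Cpar Cperp eta p th X Th and t :: real
  assume H: "rft_swimmer L0 Cpar Cperp eta p th X Th \<and> Cpar = Cperp \<and>
            (\<forall>t. \<forall>s0\<in>{0..L0}. ((\<lambda>\<sigma>. p \<sigma> t) has_real_derivative 0) (at s0 within {0..L0}))"
  show "(centre_geom L0 eta p th X Th has_vector_derivative 0) (at t)"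
    by (rule part1[OF conjunct1[OF H] conjunct1[OF conjunct2[OF H]] conjunct2[OF conjunct2[OF H]]])
qed

lemma P2: "\<exists>L0 Cpar Cperp eta p th X Th.
            rft_swimmer L0 Cpar Cperp eta p th X Th \<and> Cpar = Cperp \<and>
            (\<forall>t. \<forall>s0\<in>{0..L0}. (\<lambda>\<sigma>. p \<sigma> t) differentiable (at s0 within {0..L0})) \<and>
            (\<exists>t. \<exists>s0\<in>{0..L0}. \<exists>d. ((\<lambda>\<sigma>. p \<sigma> t) has_real_derivative d) (at s0 within {0..L0}) \<and> d \<noteq> 0) \<and>
            (\<exists>t v. (centre_geom L0 eta p th X Th has_vector_derivative v) (at t) \<and> v \<noteq> 0)"
proof -
  have d: "((\<lambda>\<sigma>. ex_p \<sigma> t) has_real_derivative sin t) (at s0 within {0..1})" for s0 t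
    unfolding ex_p_def by (auto intro!: derivative_eq_intros)
  have c: "(centre_geom 1 1 ex_p (\<lambda>s t. 0) ex_X (\<lambda>t. 0) has_vector_derivative complex_of_real (cos 0 / 12)) (at 0)"
    unfolding ex_centre[abs_def] by (rule has_vector_derivative_of_real) (auto intro!: derivative_eq_intros)
  have dd: "\<forall>t. \<forall>s0\<in>{0..1}. (\<lambda>\<sigma>. ex_p \<sigma> t) differentiable (at s0 within {0..1})"
  proof (intro allI ballI)
    fix t s0 :: real
    show "(\<lambda>\<sigma>. ex_p \<sigma> t) differentiable (at s0 within {0..1})"
      by (rule differentiableI[OF has_field_derivative_imp_has_derivative[OF d]])
  qed
  have nz: "\<exists>t. \<exists>s0\<in>{0..1::real}. \<exists>d. ((\<lambda>\<sigma>. ex_p \<sigma> t) has_real_derivative d) (at s0 within {0..1}) \<and> d \<noteq> 0"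
  proof (rule exI[of _ "pi/2"], rule bexI[of _ "0::real"])
    show "\<exists>d. ((\<lambda>\<sigma>. ex_p \<sigma> (pi/2)) has_real_derivative d) (at 0 within {0..1}) \<and> d \<noteq> 0"
      by (rule exI[of _ 1]) (use d[of "pi/2" 0] in simp)
  qed simp
  have cz: "\<exists>t v. (centre_geom 1 1 ex_p (\<lambda>s t. 0) ex_X (\<lambda>t. 0) has_vector_derivative v) (at t) \<and> v \<noteq> 0"
    by (rule exI[of _ 0], rule exI[of _ "complex_of_real (cos 0 / 12)"], rule conjI[OF c]) simp
  show ?thesis
    apply (rule exI[of _ 1], rule exI[of _ 1], rule exI[of _ 1], rule exI[of _ 1], rule exI[of _ ex_p],
        rule exI[of _ "\<lambda>s t. 0"], rule exI[of _ ex_X], rule exI[of _ "\<lambda>t. 0"])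
    apply (intro conjI)
        apply (rule ex_swimmer)
       apply simp
      apply (rule dd)
     apply (rule nz)
    apply (rule cz)
    done
qed

theorem proposition1:
  shows "(\<forall>L0 Cpar Cperp eta p th X Th.
            rft_swimmer L0 Cpar Cperp eta p th X Th \<and> Cpar = Cperp \<and>
            (\<forall>t. \<forall>s0\<in>{0..L0}. ((\<lambda>\<sigma>. p \<sigma> t) has_real_derivative 0) (at s0 within {0..L0}))
            \<longrightarrow> (\<forall>t. (centre_geom L0 eta p th X Th has_vector_derivative 0) (at t)))
       \<and>
         (\<exists>L0 Cpar Cperp eta p th X Th.
            rft_swimmer L0 Cpar Cperp eta p th X Th \<and> Cpar = Cperp \<and>
            (\<forall>t. \<forall>s0\<in>{0..L0}. (\<lambda>\<sigma>. p \<sigma> t) differentiable (at s0 within {0..L0})) \<and>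
            (\<exists>t. \<exists>s0\<in>{0..L0}. \<exists>d. ((\<lambda>\<sigma>. p \<sigma> t) has_real_derivative d) (at s0 within {0..L0}) \<and> d \<noteq> 0) \<and>
            (\<exists>t v. (centre_geom L0 eta p th X Th has_vector_derivative v) (at t) \<and> v \<noteq> 0))"
  by (rule conjI[OF P1 P2])

end
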